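(* Let $t\ge2$, $r,s,k$ be positive integers and let $A$ be an $r\times s$ zero-one matrix that is $t\times t$-partite. There exists a constant $C=C(t,r,s,k)$ such that the following holds. Let $n$ be a positive integer with $k\mid n$ and let $M$ be an $n\times n$ zero-one matrix which does not contain $A$. Partition $M$ into its $k^2$ blocks. Let $N$ be the number of copies of $K_{t,t}$ in $M$ and suppose $N>Cn^{t}$. Then one of the $k^{2}$ blocks of $M$ contains at least $\frac{(t!)^{2}}{16(rs)^{t-1}t^{2t}}\cdot\frac{N}{k^{2}}$ copies of $K_{t,t}$.
   Context: A zero-one matrix $M$ contains $A$ if one can delete some rows and columns of $M$ and turn some $1$-entries into $0$-entries so that the result is $A$. A matrix is column-$t$-partite (resp. row-$t$-partite) if its columns (resp. rows) can be cut into $t$ consecutive intervals, giving $t$ submatrices, such that every row (resp. column) of each submatrix contains at most one $1$-entry; it is $t\times t$-partite if it is both. A copy of $K_{t,t}$ in $M$ is a submatrix induced by $t$ distinct rows and $t$ distinct columns with all entries $1$. For an $n\times n$ matrix with $k\mid n$, the horizontal blocks are the submatrices formed by rows $\frac{(p-1)n}{k}+1,\dots,\frac{pn}{k}$, the vertical blocks are the submatrices formed by columns $\frac{(p-1)n}{k}+1,\dots,\frac{pn}{k}$ ($1\le p\le k$), and a block is the intersection of a horizontal and a vertical block; the $k^2$ blocks partition $M$ into $\frac nk\times\frac nk$ submatrices. *)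

theory Defs
  imports Complex_Main
begin

text \<open>A zero-one matrix with m rows and n columns is represented by a function
  nat => nat => bool (True = 1-entry), indices 0..<m and 0..<n; entries outside
  the index ranges are irrelevant.\<close>

definition contains :: "nat \<Rightarrow> nat \<Rightarrow> (nat \<Rightarrow> nat \<Rightarrow> bool) \<Rightarrow>
    nat \<Rightarrow> nat \<Rightarrow> (nat \<Rightarrow> nat \<Rightarrow> bool) \<Rightarrow> bool" where
  "contains m n M r s A \<longleftrightarrow>
     (\<exists>f g. strict_mono_on {..<r} f \<and> f ` {..<r} \<subseteq> {..<m} \<and>
            strict_mono_on {..<s} g \<and> g ` {..<s} \<subseteq> {..<n} \<and>
            (\<forall>i<r. \<forall>j<s. A i j \<longrightarrow> M (f i) (g j)))"

definition column_partite :: "nat \<Rightarrow> nat \<Rightarrow> nat \<Rightarrow> (nat \<Rightarrow> nat \<Rightarrow> bool) \<Rightarrow> bool" where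
  "column_partite t r s A \<longleftrightarrow>
     (\<exists>c::nat \<Rightarrow> nat. c 0 = 0 \<and> c t = s \<and> (\<forall>l<t. c l < c (Suc l)) \<and>
        (\<forall>l<t. \<forall>i<r. card {j. c l \<le> j \<and> j < c (Suc l) \<and> A i j} \<le> 1))"

definition row_partite :: "nat \<Rightarrow> nat \<Rightarrow> nat \<Rightarrow> (nat \<Rightarrow> nat \<Rightarrow> bool) \<Rightarrow> bool" where
  "row_partite t r s A \<longleftrightarrow>
     (\<exists>c::nat \<Rightarrow> nat. c 0 = 0 \<and> c t = r \<and> (\<forall>l<t. c l < c (Suc l)) \<and>
        (\<forall>l<t. \<forall>j<s. card {i. c l \<le> i \<and> i < c (Suc l) \<and> A i j} \<le> 1))"

definition tt_partite :: "nat \<Rightarrow> nat \<Rightarrow> nat \<Rightarrow> (nat \<Rightarrow> nat \<Rightarrow> bool) \<Rightarrow> bool" where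
  "tt_partite t r s A \<longleftrightarrow> column_partite t r s A \<and> row_partite t r s A"

definition Ktt_count :: "nat \<Rightarrow> (nat \<Rightarrow> nat \<Rightarrow> bool) \<Rightarrow> nat set \<Rightarrow> nat set \<Rightarrow> nat" where
  "Ktt_count t M Rs Cs = card {(R, C). R \<subseteq> Rs \<and> card R = t \<and> C \<subseteq> Cs \<and> card C = t \<and>
                                   (\<forall>i\<in>R. \<forall>j\<in>C. M i j)}"

definition block_idx :: "nat \<Rightarrow> nat \<Rightarrow> nat \<Rightarrow> nat set" where
  "block_idx n k p = {p * (n div k) ..< (Suc p) * (n div k)}"

end

theory Submission
  imports Defs "HOL-Analysis.Convex"
begin

definition ksub :: "nat set \<Rightarrow> nat \<Rightarrow> nat set set" where
  "ksub G t = {T. T \<subseteq> G \<and> card T = t}"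

lemma finite_ksub: "finite G \<Longrightarrow> finite (ksub G t)"
  unfolding ksub_def by (auto intro: finite_subset[of _ "Pow G"])

lemma card_ksub: "finite G \<Longrightarrow> card (ksub G t) = card G choose t"
  unfolding ksub_def by (rule n_subsets)

lemma binom_rel: "real (Suc t) * real (g choose Suc t) = real (g - t) * real (g choose t)"
proof -
  have "Suc t * (g choose Suc t) = (g - t) * (g choose t)"
    using binomial_absorption[of t g] binomial_absorb_comp[of g t] by simp
  then show ?thesis by (metis of_nat_mult)
qed

lemma sorted_nth_mono:
  assumes "finite Z" "i < j" "j < card Z"
  shows "sorted_list_of_set Z ! i < sorted_list_of_set Z ! j"
proof -
  have "sorted_wrt (<) (sorted_list_of_set Z)"
    by (simp add: strict_sorted_list_of_set)
  then show ?thesis using assms by (simp add: sorted_wrt_nth_less)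
qed

lemma sorted_nth_in:
  assumes "finite Z" "i < card Z"
  shows "sorted_list_of_set Z ! i \<in> Z"
  using assms by (metis length_sorted_list_of_set nth_mem set_sorted_list_of_set)

lemma dense_base:
  assumes "H \<subseteq> ksub G 0" "0 < real (card H)" "finite G"
  shows "\<exists>u. strict_mono_on {..<0*r} u \<and> u ` {..<0*r} \<subseteq> G \<and>
           (\<forall>h. (\<forall>a<0. a*r \<le> h a \<and> h a < Suc a * r) \<longrightarrow> u ` h ` {..<0} \<in> H)"
proof -
  have "H \<noteq> {}" using assms(2) by auto
  moreover have "H \<subseteq> {{}}"
  proof
    fix T assume "T \<in> H"
    then have "T \<subseteq> G" "card T = 0" using assms(1) unfolding ksub_def by auto
    then show "T \<in> {{}}" using assms(3) by (simp add: finite_subset)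
  qed
  ultimately have "{} \<in> H" by auto
  then show ?thesis by (auto simp: strict_mono_on_def)
qed

lemma dense:
  fixes r :: nat assumes r: "r > 0"
  shows "\<forall>\<delta>::real. \<delta> > 0 \<longrightarrow> (\<exists>g0. \<forall>G H. finite G \<longrightarrow> g0 \<le> card G \<longrightarrow> H \<subseteq> ksub G t \<longrightarrow>
     \<delta> * real (card G choose t) \<le> real (card H) \<longrightarrow>
     (\<exists>u. strict_mono_on {..<t*r} u \<and> u ` {..<t*r} \<subseteq> G \<and>
       (\<forall>h. (\<forall>a<t. a*r \<le> h a \<and> h a < Suc a * r) \<longrightarrow> u ` h ` {..<t} \<in> H)))"
proof (induction t)
  case 0
  show ?case
  proof (intro allI impI exI[of _ 0])
    fix \<delta> :: real and G H
    assume fG: "finite G" and d: "\<delta> > 0" and H: "H \<subseteq> ksub G 0" and c: "\<delta> * real (card G choose 0) \<le> real (card H)"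
    then have "0 < real (card H)" by simp
    then show "\<exists>u. strict_mono_on {..<0*r} u \<and> u ` {..<0*r} \<subseteq> G \<and>
           (\<forall>h. (\<forall>a<0. a*r \<le> h a \<and> h a < Suc a * r) \<longrightarrow> u ` h ` {..<0} \<in> H)"
      using dense_base[OF H _ fG] by blast
  qed
next
  case (Suc t)
  show ?case
  proof (intro allI impI)
    fix \<delta> :: real assume d: "\<delta> > 0"
    define \<beta> where "\<beta> = \<delta> / (8 * (real t + 1))"
    have b: "\<beta> > 0" using d by (simp add: \<beta>_def)
    define \<delta>' where "\<delta>' = 2*\<beta>*(2*\<beta>/real r)^r"
    have d': "\<delta>' > 0" using b r by (simp add: \<delta>'_def)
    obtain g0' where g0': "\<forall>G H. finite G \<longrightarrow> g0' \<le> card G \<longrightarrow> H \<subseteq> ksub G t \<longrightarrow>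
     \<delta>' * real (card G choose t) \<le> real (card H) \<longrightarrow>
     (\<exists>u. strict_mono_on {..<t*r} u \<and> u ` {..<t*r} \<subseteq> G \<and>
       (\<forall>h. (\<forall>a<t. a*r \<le> h a \<and> h a < Suc a * r) \<longrightarrow> u ` h ` {..<t} \<in> H))"
      using Suc.IH d' by blast
    define g0 where "g0 = max g0' (max (2*t+1) (max r (nat \<lceil>real r/(2*\<beta>)\<rceil>)))"
    show "\<exists>g0. \<forall>G H. finite G \<longrightarrow> g0 \<le> card G \<longrightarrow> H \<subseteq> ksub G (Suc t) \<longrightarrow>
     \<delta> * real (card G choose Suc t) \<le> real (card H) \<longrightarrow>
     (\<exists>u. strict_mono_on {..<Suc t*r} u \<and> u ` {..<Suc t*r} \<subseteq> G \<and>
       (\<forall>h. (\<forall>a<Suc t. a*r \<le> h a \<and> h a < Suc a * r) \<longrightarrow> u ` h ` {..<Suc t} \<in> H))"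
    proof (intro exI[of _ g0] allI impI)
      fix G H
      assume fG: "finite G" and gG: "g0 \<le> card G" and HG: "H \<subseteq> ksub G (Suc t)"
        and dH: "\<delta> * real (card G choose Suc t) \<le> real (card H)"
      define g where "g = card G"
      define L where "L P = {z\<in>G. insert z P \<in> H \<and> (\<forall>p\<in>P. p < z)}" for P
      define HZ where "HZ Z = {P \<in> ksub G t. Z \<subseteq> L P}" for Z
      define \<P> where "\<P> = ksub G t"
      have fP: "finite \<P>" using fG by (simp add: \<P>_def finite_ksub)
      have cP: "card \<P> = g choose t" using fG by (simp add: \<P>_def card_ksub g_def)
      have LG: "L P \<subseteq> G" for P by (auto simp: L_def)
      have fL: "finite (L P)" for P using LG fG by (meson finite_subset)
      have lg: "card (L P) \<le> g" for P using LG fG by (simp add: card_mono g_def)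
      have gpos: "2*t+1 \<le> g" "r \<le> g" "g0' \<le> g" "real r/(2*\<beta>) \<le> real g"
        using gG unfolding g0_def g_def by linarith+
      have a: "card H \<le> (\<Sum>P\<in>\<P>. card (L P))"
      proof -
        have "H \<subseteq> (\<lambda>(P,z). insert z P) ` (SIGMA P:\<P>. L P)"
        proof
          fix T assume T: "T \<in> H"
          then have TG: "T \<subseteq> G" and cT: "card T = Suc t" using HG by (auto simp: ksub_def)
          have fT: "finite T" using TG fG finite_subset by blast
          have ne: "T \<noteq> {}" using cT by auto
          define z where "z = Max T"
          have zT: "z \<in> T" using fT ne by (simp add: z_def)
          define P where "P = T - {z}"
          have "P \<in> \<P>" using TG cT fT zT by (auto simp: P_def \<P>_def ksub_def)
          moreover have "z \<in> L P"
          proof -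
            have "insert z P = T" using zT by (auto simp: P_def)
            moreover have "\<forall>p\<in>P. p < z" using fT by (auto simp: P_def z_def) (metis Max_ge order_le_neq_trans)
            ultimately show ?thesis using T zT TG by (auto simp: L_def)
          qed
          moreover have "T = insert z P" using zT by (auto simp: P_def)
          ultimately show "T \<in> (\<lambda>(P,z). insert z P) ` (SIGMA P:\<P>. L P)" by force
        qed
        then have "card H \<le> card ((\<lambda>(P,z). insert z P) ` (SIGMA P:\<P>. L P))"
          by (intro card_mono finite_imageI) (auto simp: fP fL)
        also have "\<dots> \<le> card (SIGMA P:\<P>. L P)" by (rule card_image_le) (auto simp: fP fL)
        also have "\<dots> = (\<Sum>P\<in>\<P>. card (L P))" using fP fL by (simp add: card_SigmaI)
        finally show ?thesis .
      qed
      have fZ: "finite (ksub G r)" using fG by (simp add: finite_ksub)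
      have cnt: "card {x\<in>A. Q x} = (\<Sum>x\<in>A. if Q x then 1 else 0)" if "finite A" for A :: "'x set" and Q
        using that by (simp add: sum.If_cases Int_def)
      have bsum: "(\<Sum>Z\<in>ksub G r. card (HZ Z)) = (\<Sum>P\<in>\<P>. card (L P) choose r)"
      proof -
        have "(\<Sum>Z\<in>ksub G r. card (HZ Z)) = (\<Sum>Z\<in>ksub G r. \<Sum>P\<in>\<P>. if Z \<subseteq> L P then 1 else 0)"
          unfolding HZ_def \<P>_def[symmetric] using fP by (simp add: cnt)
        also have "\<dots> = (\<Sum>P\<in>\<P>. \<Sum>Z\<in>ksub G r. if Z \<subseteq> L P then 1 else 0)"
          by (rule sum.swap)
        also have "\<dots> = (\<Sum>P\<in>\<P>. card (L P) choose r)"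
        proof (rule sum.cong[OF refl])
          fix P
          have "(\<Sum>Z\<in>ksub G r. if Z \<subseteq> L P then 1 else 0) = card {Z\<in>ksub G r. Z \<subseteq> L P}"
            using fZ by (simp add: cnt)
          also have "{Z\<in>ksub G r. Z \<subseteq> L P} = ksub (L P) r" using LG by (auto simp: ksub_def)
          also have "card \<dots> = card (L P) choose r" using fL by (simp add: card_ksub)
          finally show "(\<Sum>Z\<in>ksub G r. if Z \<subseteq> L P then 1 else 0) = card (L P) choose r" .
        qed
        finally show ?thesis .
      qed
      define M0 where "M0 = real (g choose t)"
      have M0nn: "M0 \<ge> 0" by (simp add: M0_def)
      have sumL: "\<delta> * real (g choose Suc t) \<le> (\<Sum>P\<in>\<P>. real (card (L P)))"
        using dH a unfolding g_def
      proof -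
        have "real (card H) \<le> real (\<Sum>P\<in>\<P>. card (L P))" using a by linarith
        then show "\<delta> * real (card G choose Suc t) \<le> (\<Sum>P\<in>\<P>. real (card (L P)))"
          using dH by (simp add: of_nat_sum)
      qed
      have br: "real (Suc t) * real (g choose Suc t) = real (g - t) * M0"
        unfolding M0_def by (rule binom_rel)
      have gt: "real (g - t) \<ge> real g / 2" using gpos(1) by simp
      have "real (g choose Suc t) \<ge> real g * M0 / (2 * (real t + 1))"
      proof -
        have "real g / 2 * M0 \<le> real (g - t) * M0" by (rule mult_right_mono[OF gt M0nn])
        then have "real g * M0 / 2 \<le> real (g - t) * M0" by simp
        then have "real g * M0 / 2 \<le> (real t + 1) * real (g choose Suc t)" using br by (simp add: add.commute)
        then show ?thesis by (simp add: field_simps)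
      qed
      then have "\<delta> * (real g * M0 / (2 * (real t + 1))) \<le> \<delta> * real (g choose Suc t)"
        using d by (intro mult_left_mono) auto
      moreover have "4*\<beta>*real g*M0 = \<delta> * (real g * M0 / (2*(real t+1)))" by (simp add: \<beta>_def field_simps)
      ultimately have sumL2: "4 * \<beta> * real g * M0 \<le> (\<Sum>P\<in>\<P>. real (card (L P)))"
        using sumL by linarith
      define Gd where "Gd = {P\<in>\<P>. 2*\<beta>*real g \<le> real (card (L P))}"
      have fGd: "finite Gd" using fP by (simp add: Gd_def)
      have "(\<Sum>P\<in>\<P>. real (card (L P))) = (\<Sum>P\<in>Gd. real (card (L P))) + (\<Sum>P\<in>\<P>-Gd. real (card (L P)))"
      proof -
        have "Gd \<subseteq> \<P>" by (auto simp: Gd_def)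
        then show ?thesis by (simp add: sum.subset_diff[OF _ fP] add.commute)
      qed
      also have "(\<Sum>P\<in>Gd. real (card (L P))) \<le> (\<Sum>P\<in>Gd. real g)"
        by (intro sum_mono) (simp add: lg)
      also have "(\<Sum>P\<in>\<P>-Gd. real (card (L P))) \<le> (\<Sum>P\<in>\<P>-Gd. 2*\<beta>*real g)"
        by (intro sum_mono) (auto simp: Gd_def)
      also have "(\<Sum>P\<in>\<P>-Gd. 2*\<beta>*real g) \<le> 2*\<beta>*real g * M0"
      proof -
        have "card (\<P>-Gd) \<le> card \<P>" using fP by (simp add: card_mono)
        then have "real (card (\<P>-Gd)) \<le> M0" using cP by (simp add: M0_def)
        then have "real (card (\<P>-Gd)) * (2*\<beta>*real g) \<le> M0 * (2*\<beta>*real g)"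
          using b by (intro mult_right_mono) auto
        then show ?thesis by (simp add: mult.commute)
      qed
      finally have "(\<Sum>P\<in>\<P>. real (card (L P))) \<le> real (card Gd) * real g + 2*\<beta>*real g * M0"
        by simp
      then have "4 * \<beta> * real g * M0 \<le> real (card Gd) * real g + 2*\<beta>*real g * M0"
        using sumL2 by linarith
      then have "2*\<beta>*M0 * real g \<le> real (card Gd) * real g" by (simp add: algebra_simps)
      then have cGd: "2*\<beta>*M0 \<le> real (card Gd)" using gpos(1) by (simp add: mult_le_cancel_right)
      have good: "real (card (L P) choose r) \<ge> (2*\<beta>/real r)^r * real (g choose r)" if "P \<in> Gd" for P
      proof -
        have l: "2*\<beta>*real g \<le> real (card (L P))" using that by (simp add: Gd_def)
        have rl: "real r \<le> 2*\<beta>*real g" using gpos(4) b by (simp add: field_simps)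
        then have rl': "r \<le> card (L P)" using l by linarith
        have "(2*\<beta>/real r)^r * real (g choose r) \<le> (2*\<beta>/real r)^r * real g ^ r"
          using binomial_le_pow[OF gpos(2)] b by (intro mult_left_mono) (auto simp flip: of_nat_power)
        also have "\<dots> = (2*\<beta>*real g/real r)^r" by (simp add: power_mult_distrib power_divide)
        also have "\<dots> \<le> (real (card (L P))/real r)^r"
          using l b r by (intro power_mono divide_right_mono) auto
        also have "\<dots> \<le> real (card (L P) choose r)" by (rule binomial_ge_n_over_k_pow_k[OF rl'])
        finally show ?thesis .
      qed
      have c: "\<delta>' * M0 * real (g choose r) \<le> (\<Sum>P\<in>\<P>. real (card (L P) choose r))"
      proof -
        have "\<delta>' * M0 * real (g choose r) \<le> real (card Gd) * ((2*\<beta>/real r)^r * real (g choose r))"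
        proof -
          have "0 \<le> (2*\<beta>/real r)^r * real (g choose r)" using b by simp
          from mult_right_mono[OF cGd this] show ?thesis unfolding \<delta>'_def by (simp add: algebra_simps)
        qed
        also have "\<dots> = (\<Sum>P\<in>Gd. (2*\<beta>/real r)^r * real (g choose r))" by simp
        also have "\<dots> \<le> (\<Sum>P\<in>Gd. real (card (L P) choose r))" by (intro sum_mono good)
        also have "\<dots> \<le> (\<Sum>P\<in>\<P>. real (card (L P) choose r))"
          using fP by (intro sum_mono2) (auto simp: Gd_def)
        finally show ?thesis .
      qed
      obtain Z where ZG: "Z \<in> ksub G r" and cZ: "\<delta>' * M0 \<le> real (card (HZ Z))"
      proof (rule ccontr)
        note ob = that
        assume nt: "\<not> thesis"
        have lt: "real (card (HZ Z)) < \<delta>' * M0" if "Z \<in> ksub G r" for Z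
          using ob[OF that] nt by (meson not_le)
        have ne: "ksub G r \<noteq> {}"
        proof -
          have "card (ksub G r) > 0" using fG gpos(2) by (simp add: card_ksub g_def)
          then show ?thesis by auto
        qed
        have "(\<Sum>Z\<in>ksub G r. real (card (HZ Z))) < (\<Sum>Z\<in>ksub G r. \<delta>' * M0)"
          using fZ ne lt by (intro sum_strict_mono) auto
        also have "\<dots> = \<delta>' * M0 * real (g choose r)" using fG by (simp add: card_ksub g_def)
        also have "\<dots> \<le> (\<Sum>P\<in>\<P>. real (card (L P) choose r))" by (rule c)
        also have "\<dots> = real (\<Sum>Z\<in>ksub G r. card (HZ Z))" using bsum by (simp add: of_nat_sum)
        finally show False by (simp add: of_nat_sum)
      qed
      have fZZ: "finite Z" "Z \<subseteq> G" "card Z = r" using ZG fG by (auto simp: ksub_def intro: finite_subset)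
      have "HZ Z \<subseteq> ksub G t" by (auto simp: HZ_def)
      moreover have "\<delta>' * real (card G choose t) \<le> real (card (HZ Z))" using cZ by (simp add: M0_def g_def)
      ultimately obtain u' where u'm: "strict_mono_on {..<t*r} u'" and u'G: "u' ` {..<t*r} \<subseteq> G"
        and u'h: "\<And>h. (\<forall>a<t. a*r \<le> h a \<and> h a < Suc a * r) \<Longrightarrow> u' ` h ` {..<t} \<in> HZ Z"
        using g0' fG gpos(3) unfolding g_def by blast
      define zs where "zs = sorted_list_of_set Z"
      define u where "u i = (if i < t*r then u' i else zs ! (i - t*r))" for i
      have below: "u' i < z" if i: "i < t*r" and z: "z \<in> Z" for i z
      proof -
        define a where "a = i div r"
        have at: "a < t" using i r by (simp add: a_def less_mult_imp_div_less)
        have ai1: "a*r \<le> i" by (simp add: a_def)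
        have "i = a*r + i mod r" by (simp add: a_def)
        moreover have "i mod r < r" using r by simp
        ultimately have ai2: "i < Suc a * r" by simp
        note ai = ai1 ai2
        define h where "h b = (if b = a then i else b*r)" for b
        have "\<forall>b<t. b*r \<le> h b \<and> h b < Suc b * r" using ai r by (auto simp: h_def)
        then have "u' ` h ` {..<t} \<in> HZ Z" by (rule u'h)
        then have "z \<in> L (u' ` h ` {..<t})" using z by (auto simp: HZ_def)
        moreover have "u' i \<in> u' ` h ` {..<t}" using at by (auto simp: h_def)
        ultimately show ?thesis by (auto simp: L_def)
      qed
      have zsin: "zs ! j \<in> Z" if "j < r" for j using that fZZ by (simp add: zs_def sorted_nth_in)
      show "\<exists>u. strict_mono_on {..<Suc t*r} u \<and> u ` {..<Suc t*r} \<subseteq> G \<and>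
       (\<forall>h. (\<forall>a<Suc t. a*r \<le> h a \<and> h a < Suc a * r) \<longrightarrow> u ` h ` {..<Suc t} \<in> H)"
      proof (intro exI[of _ u] conjI allI impI)
        show "strict_mono_on {..<Suc t*r} u"
        proof (rule strict_mono_onI)
          fix i j assume i: "i \<in> {..<Suc t*r}" and j: "j \<in> {..<Suc t*r}" and ij: "i < j"
          show "u i < u j"
          proof (cases "j < t*r")
            case True
            then show ?thesis using ij u'm by (auto simp: u_def strict_mono_on_def)
          next
            case jF: False
            show ?thesis
            proof (cases "i < t*r")
              case True
              then show ?thesis using jF j below zsin by (auto simp: u_def)
            next
              case False
              then show ?thesis using jF j ij fZZ
                by (auto simp: u_def zs_def intro!: sorted_nth_mono)
            qed
          qed
        qed
        show "u ` {..<Suc t*r} \<subseteq> G"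
          using u'G zsin fZZ(2) by (auto simp: u_def)
        fix h assume hh: "\<forall>a<Suc t. a*r \<le> h a \<and> h a < Suc a * r"
        then have "\<forall>a<t. a*r \<le> h a \<and> h a < Suc a * r" by auto
        then have PH: "u' ` h ` {..<t} \<in> HZ Z" by (rule u'h)
        have eqP: "u ` h ` {..<t} = u' ` h ` {..<t}"
        proof (rule image_cong[OF refl])
          fix x assume "x \<in> h ` {..<t}"
          then obtain a where "a < t" "x = h a" by auto
          then have "x < t*r" using hh
          proof -
            have "Suc a * r \<le> t * r" using \<open>a < t\<close> by (intro mult_le_mono1) simp
            then show ?thesis using hh \<open>a < t\<close> \<open>x = h a\<close> by (meson less_SucI order_less_le_trans)
          qed
          then show "u x = u' x" by (simp add: u_def)
        qed
        have ht: "t*r \<le> h t" "h t < Suc t * r" using hh by auto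
        then have "u (h t) \<in> Z" using zsin by (simp add: u_def)
        then have "u (h t) \<in> L (u' ` h ` {..<t})" using PH by (auto simp: HZ_def)
        then have "insert (u (h t)) (u' ` h ` {..<t}) \<in> H" by (simp add: L_def)
        moreover have "u ` h ` {..<Suc t} = insert (u (h t)) (u ` h ` {..<t})"
          by (simp add: lessThan_Suc)
        ultimately show "u ` h ` {..<Suc t} \<in> H" using eqP by simp
      qed

    qed
  qed
qed


definition colnb :: "(nat \<Rightarrow> nat \<Rightarrow> bool) \<Rightarrow> nat \<Rightarrow> nat set \<Rightarrow> nat set" where
  "colnb M n R = {j. j < n \<and> (\<forall>i\<in>R. M i j)}"

definition SS :: "(nat \<Rightarrow> nat \<Rightarrow> bool) \<Rightarrow> nat \<Rightarrow> nat \<Rightarrow> nat set \<Rightarrow> nat set" where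
  "SS M n k R = {q. q < k \<and> colnb M n R \<inter> block_idx n k q \<noteq> {}}"

lemma block_order:
  assumes "q < q'" "x \<in> block_idx n k q" "y \<in> block_idx n k q'"
  shows "x < y"
proof -
  have "Suc q * (n div k) \<le> q' * (n div k)" using assms(1) by (intro mult_le_mono1) simp
  then show ?thesis using assms(2,3) by (auto simp: block_idx_def)
qed

lemma c_mono:
  fixes c :: "nat \<Rightarrow> nat"
  assumes "\<forall>l<t. c l < c (Suc l)" "l \<le> l'" "l' \<le> t"
  shows "c l \<le> c l'"
  using assms(2,3)
proof (induction l' rule: nat_induct)
  case 0 then show ?case by auto
next
  case (Suc l')
  show ?case
  proof (cases "l = Suc l'")
    case True then show ?thesis by simp
  next
    case False
    then have "c l \<le> c l'" using Suc by simp
    also have "c l' < c (Suc l')" using assms(1) Suc.prems by simp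
    finally show ?thesis by simp
  qed
qed

lemma band_exists:
  fixes c :: "nat \<Rightarrow> nat"
  assumes c0: "c 0 = 0" and ct: "c t = r" and cm: "\<forall>l<t. c l < c (Suc l)" and i: "i < r"
  shows "\<exists>l<t. c l \<le> i \<and> i < c (Suc l)"
proof -
  have t: "t > 0" using c0 ct i by (cases t) auto
  have ex: "\<exists>l. i < c (Suc l)" using ct i t by (metis Suc_pred)
  define l where "l = (LEAST l. i < c (Suc l))"
  have l1: "i < c (Suc l)" unfolding l_def using ex by (rule LeastI_ex)
  have lt: "l < t"
  proof -
    have "l \<le> t - 1" unfolding l_def using ct i t by (intro Least_le) simp
    then show ?thesis using t by simp
  qed
  have "c l \<le> i"
  proof (cases l)
    case 0 then show ?thesis using c0 by simp
  next
    case (Suc l')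
    then have "\<not> i < c (Suc l')" unfolding l_def using not_less_Least[of l' "\<lambda>l. i < c (Suc l)"]
      by (metis Suc l_def lessI)
    then show ?thesis using Suc by simp
  qed
  then show ?thesis using l1 lt by blast
qed

lemma embed:
  assumes rp: "row_partite t r s A" and r: "r > 0"
    and um: "strict_mono_on {..<t*r} u" and uR: "u ` {..<t*r} \<subseteq> {..<n}"
    and Sk: "S \<subseteq> {..<k}" and cS: "s \<le> card S"
    and tr: "\<And>h. (\<forall>a<t. a*r \<le> h a \<and> h a < Suc a * r) \<Longrightarrow> S \<subseteq> SS M n k (u ` h ` {..<t})"
  shows "contains n n M r s A"
proof -
  obtain c :: "nat \<Rightarrow> nat" where c0: "c 0 = 0" and ct: "c t = r" and cm: "\<forall>l<t. c l < c (Suc l)"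
    and cc: "\<forall>l<t. \<forall>j<s. card {i. c l \<le> i \<and> i < c (Suc l) \<and> A i j} \<le> 1"
    using rp unfolding row_partite_def by blast
  have cmono: "c l \<le> c l'" if "l \<le> l'" "l' \<le> t" for l l' using c_mono[OF cm that] .
  have cr: "c l \<le> r" if "l \<le> t" for l using cmono[OF that order_refl] ct by simp
  define band where "band i = (SOME l. l<t \<and> c l \<le> i \<and> i < c (Suc l))" for i
  have bandP: "band i < t \<and> c (band i) \<le> i \<and> i < c (Suc (band i))" if "i < r" for i
    unfolding band_def using band_exists[OF c0 ct cm that] by (rule someI_ex)
  have band_uniq: "band i = l" if i: "i < r" and l: "l < t" "c l \<le> i" "i < c (Suc l)" for i l
  proof (rule ccontr)
    assume ne: "band i \<noteq> l"
    have bi: "band i < t" "c (band i) \<le> i" "i < c (Suc (band i))" using bandP[OF i] by auto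
    show False
    proof (cases "band i < l")
      case True
      then have "c (Suc (band i)) \<le> c l" using l by (intro cmono) auto
      then show False using bi l by linarith
    next
      case False
      then have "l < band i" using ne by simp
      then have "c (Suc l) \<le> c (band i)" using bi by (intro cmono) auto
      then show False using bi l by linarith
    qed
  qed
  define idx where "idx i = band i * r + (i - c (band i))" for i
  have idxb: "band i * r \<le> idx i \<and> idx i < Suc (band i) * r" if "i < r" for i
  proof -
    have "i - c (band i) < r" using that by linarith
    then show ?thesis by (simp add: idx_def)
  qed
  have idxt: "idx i < t * r" if "i < r" for i
  proof -
    have "Suc (band i) * r \<le> t * r" using bandP[OF that] by (intro mult_le_mono1) simp
    then show ?thesis using idxb[OF that] by linarith
  qed
  have idxm: "idx i < idx i'" if "i < i'" "i' < r" for i i'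
  proof -
    have i: "i < r" using that by simp
    have bl: "band i \<le> band i'"
    proof (rule ccontr)
      assume "\<not> band i \<le> band i'"
      then have "c (Suc (band i')) \<le> c (band i)" using bandP[OF i] by (intro cmono) auto
      then show False using bandP[OF i] bandP[OF that(2)] that(1) by linarith
    qed
    show ?thesis
    proof (cases "band i = band i'")
      case True
      then show ?thesis using bandP[OF i] bandP[OF that(2)] that(1) by (auto simp: idx_def)
    next
      case False
      then have "Suc (band i) * r \<le> band i' * r" using bl by (intro mult_le_mono1) simp
      then show ?thesis using idxb[OF i] idxb[OF that(2)] by linarith
    qed
  qed
  define f where "f i = u (idx i)" for i
  have fm: "strict_mono_on {..<r} f"
  proof (rule strict_mono_onI)
    fix i i' assume "i \<in> {..<r}" "i' \<in> {..<r}" "i < i'"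
    then have "idx i < idx i'" "idx i \<in> {..<t*r}" "idx i' \<in> {..<t*r}" using idxm idxt by auto
    then show "f i < f i'" unfolding f_def using strict_mono_onD[OF um] by blast
  qed
  have fR: "f ` {..<r} \<subseteq> {..<n}" using idxt uR unfolding f_def by auto
  have fS: "finite S" using Sk finite_subset by blast
  define sl where "sl = sorted_list_of_set S"
  define Bnd where "Bnd a j = (\<exists>i. c a \<le> i \<and> i < c (Suc a) \<and> A i j)" for a j
  define hj where "hj j a = (if Bnd a j then a*r + ((SOME i. c a \<le> i \<and> i < c (Suc a) \<and> A i j) - c a) else a*r)" for j a
  have hjv: "\<forall>a<t. a*r \<le> hj j a \<and> hj j a < Suc a * r" for j
  proof (intro allI impI)
    fix a assume a: "a < t"
    show "a*r \<le> hj j a \<and> hj j a < Suc a * r"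
    proof (cases "Bnd a j")
      case True
      define i0 where "i0 = (SOME i. c a \<le> i \<and> i < c (Suc a) \<and> A i j)"
      have "c a \<le> i0 \<and> i0 < c (Suc a) \<and> A i0 j" unfolding i0_def using True unfolding Bnd_def by (rule someI_ex)
      moreover have "c (Suc a) \<le> r" using a cr by simp
      ultimately have "i0 - c a < r" by linarith
      then show ?thesis using True by (simp add: hj_def i0_def[symmetric])
    next
      case False
      then show ?thesis using r by (simp add: hj_def)
    qed
  qed
  define T where "T j = u ` hj j ` {..<t}" for j
  have slS: "sl ! j \<in> S" if "j < s" for j using that cS fS by (simp add: sl_def sorted_nth_in)
  have exg: "\<exists>x. x \<in> colnb M n (T j) \<inter> block_idx n k (sl ! j)" if "j < s" for j
  proof -
    have "sl ! j \<in> SS M n k (T j)" using tr[OF hjv] slS[OF that] unfolding T_def by blast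
    then show ?thesis by (auto simp: SS_def)
  qed
  define g where "g j = (SOME x. x \<in> colnb M n (T j) \<inter> block_idx n k (sl ! j))" for j
  have gP: "g j \<in> colnb M n (T j) \<inter> block_idx n k (sl ! j)" if "j < s" for j
    unfolding g_def using exg[OF that] by (rule someI_ex)
  have gm: "strict_mono_on {..<s} g"
  proof (rule strict_mono_onI)
    fix j j' assume "j \<in> {..<s}" "j' \<in> {..<s}" and jj: "j < j'"
    then have "sl ! j < sl ! j'" using cS fS unfolding sl_def by (intro sorted_nth_mono) auto
    moreover have "g j \<in> block_idx n k (sl ! j)" "g j' \<in> block_idx n k (sl ! j')"
      using gP \<open>j \<in> {..<s}\<close> \<open>j' \<in> {..<s}\<close> by auto
    ultimately show "g j < g j'" by (rule block_order)
  qed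
  have gR: "g ` {..<s} \<subseteq> {..<n}" using gP by (auto simp: colnb_def)
  have ones: "M (f i) (g j)" if i: "i < r" and j: "j < s" and Aij: "A i j" for i j
  proof -
    define l where "l = band i"
    have l: "l < t" "c l \<le> i" "i < c (Suc l)" using bandP[OF i] by (auto simp: l_def)
    have B: "Bnd l j" using l Aij by (auto simp: Bnd_def)
    define i0 where "i0 = (SOME i. c l \<le> i \<and> i < c (Suc l) \<and> A i j)"
    have i0: "c l \<le> i0 \<and> i0 < c (Suc l) \<and> A i0 j" unfolding i0_def using B unfolding Bnd_def by (rule someI_ex)
    have fin: "finite {i. c l \<le> i \<and> i < c (Suc l) \<and> A i j}" by (rule finite_subset[of _ "{..<c (Suc l)}"]) auto
    have "card {i. c l \<le> i \<and> i < c (Suc l) \<and> A i j} \<le> Suc 0" using cc l j by simp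
    then have "\<forall>a\<in>{i. c l \<le> i \<and> i < c (Suc l) \<and> A i j}. \<forall>b\<in>{i. c l \<le> i \<and> i < c (Suc l) \<and> A i j}. a = b"
      using card_le_Suc0_iff_eq[OF fin] by blast
    then have "i0 = i" using i0 l Aij by blast
    then have "hj j l = l*r + (i - c l)" using B by (simp add: hj_def i0_def[symmetric])
    then have hji: "hj j l = idx i" by (simp add: idx_def l_def)
    have "f i \<in> T j" unfolding f_def T_def using l(1) hji[symmetric] by blast
    then show ?thesis using gP[OF j] by (simp add: colnb_def)
  qed
  show ?thesis unfolding contains_def
    by (intro exI[of _ f] exI[of _ g] conjI fm fR gm gR allI impI ones)
qed


lemma Ktt_sum:
  assumes "finite Rs" "finite Cs"
  shows "Ktt_count t M Rs Cs = (\<Sum>R\<in>ksub Rs t. card {j\<in>Cs. \<forall>i\<in>R. M i j} choose t)"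
proof -
  have fC: "finite {j\<in>Cs. \<forall>i\<in>R. M i j}" if "finite Cs" for R using that by simp
  have eq: "{(R, C). R \<subseteq> Rs \<and> card R = t \<and> C \<subseteq> Cs \<and> card C = t \<and> (\<forall>i\<in>R. \<forall>j\<in>C. M i j)}
      = (SIGMA R:ksub Rs t. ksub {j\<in>Cs. \<forall>i\<in>R. M i j} t)"
    by (auto simp: ksub_def)
  have True: "finite Cs" by fact
    have "Ktt_count t M Rs Cs = card (SIGMA R:ksub Rs t. ksub {j\<in>Cs. \<forall>i\<in>R. M i j} t)"
      unfolding Ktt_count_def eq ..
    also have "\<dots> = (\<Sum>R\<in>ksub Rs t. card (ksub {j\<in>Cs. \<forall>i\<in>R. M i j} t))"
      using assms True by (intro card_SigmaI) (auto simp: finite_ksub)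
    also have "\<dots> = (\<Sum>R\<in>ksub Rs t. card {j\<in>Cs. \<forall>i\<in>R. M i j} choose t)"
      using True by (intro sum.cong refl card_ksub) simp
    finally show ?thesis .
qed

lemma Ktt_swap: "Ktt_count t M Rs Cs = Ktt_count t (\<lambda>i j. M j i) Cs Rs"
proof -
  have "{(R, C). R \<subseteq> Cs \<and> card R = t \<and> C \<subseteq> Rs \<and> card C = t \<and> (\<forall>i\<in>R. \<forall>j\<in>C. M j i)}
     = prod.swap ` {(R, C). R \<subseteq> Rs \<and> card R = t \<and> C \<subseteq> Cs \<and> card C = t \<and> (\<forall>i\<in>R. \<forall>j\<in>C. M i j)}"
    by (auto simp: image_iff)
  then show ?thesis unfolding Ktt_count_def by (simp add: card_image)
qed

lemma convex_pow: "convex_on {0::real..} (\<lambda>x. x^t)"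
proof (cases "even t")
  case True
  then show ?thesis using convex_on_subset[OF convex_power_even[OF True]] by auto
next
  case False
  then show ?thesis using convex_power_odd by auto
qed

lemma pmean:
  fixes x :: "'a \<Rightarrow> real"
  assumes "finite Q" "Q \<noteq> {}" "\<And>q. q \<in> Q \<Longrightarrow> x q \<ge> 0" "t \<ge> 1"
  shows "(\<Sum>q\<in>Q. x q)^t \<le> real (card Q)^(t-1) * (\<Sum>q\<in>Q. x q ^ t)"
proof -
  define c where "c = real (card Q)"
  have c: "c > 0" using assms by (simp add: c_def card_gt_0_iff)
  have "(\<Sum>q\<in>Q. (1/c) *\<^sub>R x q)^t \<le> (\<Sum>q\<in>Q. (1/c) * (x q)^t)"
    using assms c by (intro convex_on_sum[OF assms(1,2) convex_pow]) (auto simp: c_def)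
  then have "((\<Sum>q\<in>Q. x q)/c)^t \<le> (\<Sum>q\<in>Q. (x q)^t)/c"
    by (simp add: sum_distrib_left sum_divide_distrib)
  then have "(\<Sum>q\<in>Q. x q)^t / c^t \<le> (\<Sum>q\<in>Q. (x q)^t)/c" by (simp add: power_divide)
  then have "(\<Sum>q\<in>Q. x q)^t \<le> (\<Sum>q\<in>Q. (x q)^t)/c * c^t" using c by (simp add: field_simps)
  also have "\<dots> = c^(t-1) * (\<Sum>q\<in>Q. (x q)^t)" using c assms(4)
    by (simp add: field_simps power_eq_if)
  finally show ?thesis by (simp add: c_def)
qed

lemma binom_lower: "real (d choose t) \<ge> (real d / real t)^t - 1"
proof (cases "t \<le> d")
  case True
  have "(real d / real t)^t \<le> real (d choose t)" by (rule binomial_ge_n_over_k_pow_k[OF True])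
  then show ?thesis by simp
next
  case False
  have "(real d / real t)^t \<le> 1" using False by (intro power_le_one) auto
  then show ?thesis by simp
qed

lemma conc_bound:
  fixes d :: "nat \<Rightarrow> nat"
  assumes fQ: "finite Q" and cQ: "card Q \<le> s" and s: "s > 0" and t: "t \<ge> 1"
  shows "real (fact t) / (real t ^ t * real s ^ (t-1)) * real ((\<Sum>q\<in>Q. d q) choose t) - real s
          \<le> (\<Sum>q\<in>Q. real (d q choose t))"
proof (cases "Q = {}")
  case True
  have "t > 0" using t by simp
  then show ?thesis using True by (simp add: binomial_eq_0)
next
  case False
  define D where "D = (\<Sum>q\<in>Q. d q)"
  have "(\<Sum>q\<in>Q. real (d q choose t)) \<ge> (\<Sum>q\<in>Q. (real (d q) / real t)^t - 1)"
    by (intro sum_mono binom_lower)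
  also have "(\<Sum>q\<in>Q. (real (d q) / real t)^t - 1) = (\<Sum>q\<in>Q. real (d q)^t) / real t^t - real (card Q)"
    by (simp add: sum_subtractf power_divide sum_divide_distrib)
  finally have A: "(\<Sum>q\<in>Q. real (d q)^t) / real t^t - real s \<le> (\<Sum>q\<in>Q. real (d q choose t))"
    using cQ by linarith
  have pm: "(\<Sum>q\<in>Q. real (d q))^t \<le> real (card Q)^(t-1) * (\<Sum>q\<in>Q. real (d q)^t)"
    using pmean[OF fQ False _ t] by simp
  have "real (card Q)^(t-1) \<le> real s^(t-1)" using cQ by (intro power_mono) auto
  then have pm2: "real D^t \<le> real s^(t-1) * (\<Sum>q\<in>Q. real (d q)^t)"
  proof -
    have S0: "0 \<le> (\<Sum>q\<in>Q. real (d q)^t)" by (intro sum_nonneg) simp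
    have "real D = (\<Sum>q\<in>Q. real (d q))" by (simp add: D_def of_nat_sum)
    then have "real D^t \<le> real (card Q)^(t-1) * (\<Sum>q\<in>Q. real (d q)^t)" using pm by simp
    also have "\<dots> \<le> real s^(t-1) * (\<Sum>q\<in>Q. real (d q)^t)"
      by (rule mult_right_mono[OF \<open>real (card Q)^(t-1) \<le> real s^(t-1)\<close> S0])
    finally show ?thesis .
  qed
  have fD: "real (fact t) * real (D choose t) \<le> real D^t"
  proof -
    have "(D choose t) * fact t \<le> D^t" by (rule binomial_fact_pow)
    then have "real ((D choose t) * fact t) \<le> real (D^t)" by linarith
    then show ?thesis by (simp add: mult.commute)
  qed
  have sp: "real s^(t-1) > 0" "real t^t > 0" using s t by auto
  have "real (fact t) / (real t ^ t * real s ^ (t-1)) * real (D choose t)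
        = real (fact t) * real (D choose t) / (real t ^ t * real s ^ (t-1))" by simp
  also have "\<dots> \<le> real D^t / (real t ^ t * real s ^ (t-1))"
    using fD sp by (intro divide_right_mono) auto
  also have "\<dots> \<le> (\<Sum>q\<in>Q. real (d q)^t) / real t^t"
    using pm2 sp by (simp add: field_simps)
  finally show ?thesis using A unfolding D_def by linarith
qed


lemma block_sub:
  assumes "q < k" "k dvd n"
  shows "block_idx n k q \<subseteq> {..<n}"
proof -
  obtain m where n: "n = k * m" using assms(2) by blast
  have "Suc q * m \<le> k * m" using assms(1) by (intro mult_le_mono1) simp
  then show ?thesis using n assms by (auto simp: block_idx_def)
qed

lemma card_blocks:
  assumes k: "k > 0" and kn: "k dvd n" and X: "X \<subseteq> {..<n}"
  shows "card X = (\<Sum>q<k. card (X \<inter> block_idx n k q))"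
proof -
  obtain m where n: "n = k * m" using kn by blast
  have mdef: "n div k = m" using n k by simp
  have "X = (\<Union>q<k. X \<inter> block_idx n k q)"
  proof
    show "X \<subseteq> (\<Union>q<k. X \<inter> block_idx n k q)"
    proof
      fix x assume xX: "x \<in> X"
      then have xn: "x < k * m" using X n by auto
      then have m0: "m > 0" by (cases m) auto
      define q where "q = x div m"
      have "q < k" using xn m0 by (simp add: q_def less_mult_imp_div_less)
      moreover have "x \<in> block_idx n k q"
      proof -
        have "q * m \<le> x" by (simp add: q_def)
        moreover have "x < Suc q * m"
          using m0 by (simp add: q_def) (metis add.commute dividend_less_div_times mult.commute)
        ultimately show ?thesis by (simp add: block_idx_def mdef)
      qed
      ultimately show "x \<in> (\<Union>q<k. X \<inter> block_idx n k q)" using xX by blast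
    qed
  qed auto
  then have "card X = card (\<Union>q<k. X \<inter> block_idx n k q)" by simp
  also have "\<dots> = (\<Sum>q<k. card (X \<inter> block_idx n k q))"
  proof (rule card_UN_disjoint)
    show "finite {..<k}" by simp
    show "\<forall>i::nat\<in>{..<k}. finite (X \<inter> block_idx n k i)" using X by (auto intro: finite_subset)
    show "\<forall>i::nat\<in>{..<k}. \<forall>j\<in>{..<k}. i \<noteq> j \<longrightarrow> X \<inter> block_idx n k i \<inter> (X \<inter> block_idx n k j) = {}"
    proof (intro ballI impI)
      fix i j :: nat assume "i \<noteq> j"
      then show "X \<inter> block_idx n k i \<inter> (X \<inter> block_idx n k j) = {}"
        using block_order[of i j _ n k] block_order[of j i _ n k] by (cases "i < j") force+
    qed
  qed
  finally show ?thesis .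
qed

lemma spread_part:
  fixes G :: "nat set"
  assumes g0: "\<forall>G H. finite G \<longrightarrow> g0 \<le> card G \<longrightarrow> H \<subseteq> ksub G t \<longrightarrow>
     (1/2^(k+1)) * real (card G choose t) \<le> real (card H) \<longrightarrow>
     (\<exists>u. strict_mono_on {..<t*r} u \<and> u ` {..<t*r} \<subseteq> G \<and>
       (\<forall>h. (\<forall>a<t. a*r \<le> h a \<and> h a < Suc a * r) \<longrightarrow> u ` h ` {..<t} \<in> H))"
   and nc: "\<not> contains n n M r s A" and rp: "row_partite t r s A" and r: "r > 0"
   and G: "G \<subseteq> {..<n}" "g0 \<le> card G"
  shows "real (card {R\<in>ksub G t. s \<le> card (SS M n k R)}) \<le> real (card G choose t) / 2"
proof (rule ccontr)
  define X where "X = {R\<in>ksub G t. s \<le> card (SS M n k R)}"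
  assume "\<not> real (card {R\<in>ksub G t. s \<le> card (SS M n k R)}) \<le> real (card G choose t) / 2"
  then have big: "real (card X) > real (card G choose t) / 2" unfolding X_def by simp
  have fG: "finite G" using G(1) finite_subset by blast
  have fX: "finite X" using fG by (simp add: X_def finite_ksub)
  define HS where "HS S = {R\<in>X. SS M n k R = S}" for S
  have XU: "X = (\<Union>S\<in>Pow {..<k}. HS S)"
  proof
    show "X \<subseteq> (\<Union>S\<in>Pow {..<k}. HS S)"
    proof
      fix R assume "R \<in> X"
      moreover have "SS M n k R \<in> Pow {..<k}" by (auto simp: SS_def)
      ultimately show "R \<in> (\<Union>S\<in>Pow {..<k}. HS S)" unfolding HS_def by blast
    qed
    show "(\<Union>S\<in>Pow {..<k}. HS S) \<subseteq> X" unfolding HS_def by blast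
  qed
  have "card X \<le> (\<Sum>S\<in>Pow {..<k}. card (HS S))" unfolding XU by (rule card_UN_le) simp
  then have sumX: "real (card X) \<le> (\<Sum>S\<in>Pow {..<k}. real (card (HS S)))" by (metis of_nat_le_iff of_nat_sum)
  obtain S where S: "S \<in> Pow {..<k}" and cS: "real (card (HS S)) \<ge> real (card X) / 2^k"
  proof (rule ccontr)
    note ob = that
    assume nt: "\<not> thesis"
    have lt: "real (card (HS S)) < real (card X) / 2^k" if "S \<in> Pow {..<k}" for S
      using ob[OF that] nt by (meson not_le)
    have "(\<Sum>S\<in>Pow {..<k}. real (card (HS S))) < (\<Sum>S\<in>Pow {..<k}. real (card X) / 2^k)"
      using lt by (intro sum_strict_mono) auto
    also have "\<dots> = real (card X)" by (simp add: card_Pow)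
    finally show False using sumX by linarith
  qed
  have "(1/2^(k+1)) * real (card G choose t) \<le> real (card (HS S))"
  proof -
    have "(1/2^(k+1)) * real (card G choose t) = (real (card G choose t) / 2) / 2^k" by simp
    also have "\<dots> \<le> real (card X) / 2^k" using big by (intro divide_right_mono) auto
    finally show ?thesis using cS by linarith
  qed
  moreover have "HS S \<subseteq> ksub G t" by (auto simp: HS_def X_def)
  ultimately obtain u where um: "strict_mono_on {..<t*r} u" and uG: "u ` {..<t*r} \<subseteq> G"
    and uh: "\<And>h. (\<forall>a<t. a*r \<le> h a \<and> h a < Suc a * r) \<Longrightarrow> u ` h ` {..<t} \<in> HS S"
    using g0 fG G(2) by blast
  have "\<forall>a<t. a*r \<le> a*r \<and> a*r < Suc a * r" using r by simp
  then have "u ` (\<lambda>a. a*r) ` {..<t} \<in> HS S" by (rule uh)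
  then have cs: "s \<le> card S" by (auto simp: HS_def X_def)
  have "contains n n M r s A"
  proof (rule embed[OF rp r um])
    show "u ` {..<t*r} \<subseteq> {..<n}" using uG G(1) by blast
    show "S \<subseteq> {..<k}" using S by blast
    show "s \<le> card S" by (rule cs)
    fix h assume "\<forall>a<t. a*r \<le> h a \<and> h a < Suc a * r"
    then have "u ` h ` {..<t} \<in> HS S" by (rule uh)
    then show "S \<subseteq> SS M n k (u ` h ` {..<t})" by (auto simp: HS_def)
  qed
  then show False using nc by simp
qed

lemma dcount:
  assumes "finite A" "finite B"
  shows "(\<Sum>a\<in>A. card {b\<in>B. P a b}) = (\<Sum>b\<in>B. card {a\<in>A. P a b})"
proof -
  have cnt: "card {x\<in>X. Q x} = (\<Sum>x\<in>X. if Q x then 1 else 0)" if "finite X" for X :: "'x set" and Q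
    using that by (simp add: sum.If_cases Int_def)
  have "(\<Sum>a\<in>A. card {b\<in>B. P a b}) = (\<Sum>a\<in>A. \<Sum>b\<in>B. if P a b then 1 else 0)"
    using assms by (simp add: cnt)
  also have "\<dots> = (\<Sum>b\<in>B. \<Sum>a\<in>A. if P a b then 1 else 0)" by (rule sum.swap)
  also have "\<dots> = (\<Sum>b\<in>B. card {a\<in>A. P a b})" using assms by (simp add: cnt)
  finally show ?thesis .
qed

lemma choose_le_pow: "real (n choose t) \<le> real n ^ t"
proof -
  have "(n choose t) * fact t \<le> n^t" by (rule binomial_fact_pow)
  moreover have "(n choose t) \<le> (n choose t) * fact t" by simp
  ultimately have "n choose t \<le> n^t" by linarith
  then show ?thesis by (metis of_nat_le_iff of_nat_power)
qed

lemma spread_total: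
  assumes g0: "\<forall>G H. finite G \<longrightarrow> g0 \<le> card G \<longrightarrow> H \<subseteq> ksub G t \<longrightarrow>
     (1/2^(k+1)) * real (card G choose t) \<le> real (card H) \<longrightarrow>
     (\<exists>u. strict_mono_on {..<t*r} u \<and> u ` {..<t*r} \<subseteq> G \<and>
       (\<forall>h. (\<forall>a<t. a*r \<le> h a \<and> h a < Suc a * r) \<longrightarrow> u ` h ` {..<t} \<in> H))"
   and nc: "\<not> contains n n M r s A" and rp: "row_partite t r s A" and r: "r > 0"
   and Rs: "Rs \<subseteq> {..<n}"
  shows "real (\<Sum>R\<in>{R\<in>ksub Rs t. s \<le> card (SS M n k R)}. card (colnb M n R) choose t)
     \<le> real (Ktt_count t M Rs {..<n}) / 2 + real (g0 choose t) * real n ^ t"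
proof -
  have fR: "finite Rs" using Rs finite_subset by blast
  define \<C> where "\<C> = ksub {..<n} t"
  define Psp where "Psp = {R\<in>ksub Rs t. s \<le> card (SS M n k R)}"
  define GC where "GC C = {i\<in>Rs. \<forall>j\<in>C. M i j}" for C
  have fC: "finite \<C>" by (simp add: \<C>_def finite_ksub)
  have fP: "finite Psp" using fR by (simp add: Psp_def finite_ksub)
  have Nsw: "Ktt_count t M Rs {..<n} = (\<Sum>C\<in>\<C>. card (GC C) choose t)"
  proof -
    have "Ktt_count t M Rs {..<n} = Ktt_count t (\<lambda>i j. M j i) {..<n} Rs" by (rule Ktt_swap)
    also have "\<dots> = (\<Sum>C\<in>\<C>. card {j\<in>Rs. \<forall>i\<in>C. M j i} choose t)"
      unfolding \<C>_def using fR by (intro Ktt_sum) auto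
    finally show ?thesis by (simp add: GC_def)
  qed
  have eqR: "card (colnb M n R) choose t = card {C\<in>\<C>. \<forall>i\<in>R. \<forall>j\<in>C. M i j}" for R
  proof -
    have "{C\<in>\<C>. \<forall>i\<in>R. \<forall>j\<in>C. M i j} = ksub (colnb M n R) t"
      by (auto simp: \<C>_def ksub_def colnb_def)
    then show ?thesis by (simp add: card_ksub colnb_def)
  qed
  have "(\<Sum>R\<in>Psp. card (colnb M n R) choose t) = (\<Sum>R\<in>Psp. card {C\<in>\<C>. \<forall>i\<in>R. \<forall>j\<in>C. M i j})"
    by (simp add: eqR)
  also have "\<dots> = (\<Sum>C\<in>\<C>. card {R\<in>Psp. \<forall>i\<in>R. \<forall>j\<in>C. M i j})" by (rule dcount[OF fP fC])
  finally have SP: "real (\<Sum>R\<in>Psp. card (colnb M n R) choose t) = (\<Sum>C\<in>\<C>. real (card {R\<in>Psp. \<forall>i\<in>R. \<forall>j\<in>C. M i j}))"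
    by (simp add: of_nat_sum)
  have each: "real (card {R\<in>Psp. \<forall>i\<in>R. \<forall>j\<in>C. M i j}) \<le> real (card (GC C) choose t) / 2 + real (g0 choose t)" for C
  proof -
    have eq: "{R\<in>Psp. \<forall>i\<in>R. \<forall>j\<in>C. M i j} = {R\<in>ksub (GC C) t. s \<le> card (SS M n k R)}"
      by (auto simp: Psp_def ksub_def GC_def)
    have GCn: "GC C \<subseteq> {..<n}" using Rs by (auto simp: GC_def)
    have fG: "finite (GC C)" using fR by (simp add: GC_def)
    show ?thesis
    proof (cases "g0 \<le> card (GC C)")
      case True
      have "real (card {R\<in>ksub (GC C) t. s \<le> card (SS M n k R)}) \<le> real (card (GC C) choose t) / 2"
        by (rule spread_part[OF g0 nc rp r GCn True])
      then show ?thesis unfolding eq by simp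
    next
      case False
      have "card {R\<in>ksub (GC C) t. s \<le> card (SS M n k R)} \<le> card (ksub (GC C) t)"
        using fG by (intro card_mono) (auto simp: finite_ksub)
      also have "\<dots> = card (GC C) choose t" using fG by (simp add: card_ksub)
      also have "\<dots> \<le> g0 choose t" using False by (intro binomial_right_mono) simp
      finally show ?thesis unfolding eq by simp
    qed
  qed
  have "(\<Sum>C\<in>\<C>. real (card {R\<in>Psp. \<forall>i\<in>R. \<forall>j\<in>C. M i j}))
      \<le> (\<Sum>C\<in>\<C>. real (card (GC C) choose t) / 2 + real (g0 choose t))"
    by (intro sum_mono each)
  also have "\<dots> = real (Ktt_count t M Rs {..<n}) / 2 + real (card \<C>) * real (g0 choose t)"
    by (simp add: Nsw sum.distrib sum_divide_distrib of_nat_sum)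
  also have "real (card \<C>) * real (g0 choose t) \<le> real n ^ t * real (g0 choose t)"
  proof -
    have "real (card \<C>) \<le> real n ^ t" using choose_le_pow[of n t] by (simp add: \<C>_def card_ksub)
    then show ?thesis by (intro mult_right_mono) auto
  qed
  finally show ?thesis using SP unfolding Psp_def by (simp add: mult.commute)
qed

lemma conc_R:
  assumes t: "t \<ge> 1" and s: "s > 0" and k: "k > 0" and kn: "k dvd n" and cs: "\<not> s \<le> card (SS M n k R)"
  shows "real (fact t) / (real t ^ t * real s ^ (t-1)) * real (card (colnb M n R) choose t) - real s
     \<le> (\<Sum>q<k. real (card (colnb M n R \<inter> block_idx n k q) choose t))"
proof -
  define d where "d q = card (colnb M n R \<inter> block_idx n k q)" for q
  have SSk: "SS M n k R \<subseteq> {..<k}" by (auto simp: SS_def)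
  have fSS: "finite (SS M n k R)" using SSk finite_subset by blast
  have "card (colnb M n R) = (\<Sum>q<k. d q)" unfolding d_def
    by (rule card_blocks[OF k kn]) (auto simp: colnb_def)
  also have "\<dots> = (\<Sum>q\<in>SS M n k R. d q)"
    using SSk by (intro sum.mono_neutral_right) (auto simp: SS_def d_def)
  finally have D: "card (colnb M n R) = (\<Sum>q\<in>SS M n k R. d q)" .
  have "real (fact t) / (real t ^ t * real s ^ (t-1)) * real (card (colnb M n R) choose t) - real s
     \<le> (\<Sum>q\<in>SS M n k R. real (d q choose t))"
    unfolding D using cs by (intro conc_bound[OF fSS _ s t]) simp
  also have "\<dots> \<le> (\<Sum>q<k. real (d q choose t))"
    by (intro sum_mono2 SSk) auto
  finally show ?thesis by (simp add: d_def)
qed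

lemma strip_lemma:
  assumes t: "t \<ge> 1" and r: "r > 0" and s: "s > 0" and k: "k > 0" and rp: "row_partite t r s A"
  shows "\<exists>C::real. \<forall>n M Rs. n > 0 \<longrightarrow> k dvd n \<longrightarrow> Rs \<subseteq> {..<n} \<longrightarrow> \<not> contains n n M r s A \<longrightarrow>
     C * real n ^ t < real (Ktt_count t M Rs {..<n}) \<longrightarrow>
     (\<exists>q<k. real (fact t) / (4 * real s^(t-1) * real t^t) * real (Ktt_count t M Rs {..<n}) / real k
        \<le> real (Ktt_count t M Rs (block_idx n k q)))"
proof -
  have dp: "(1::real)/2^(k+1) > 0" by simp
  obtain g0 where g0: "\<forall>G H. finite G \<longrightarrow> g0 \<le> card G \<longrightarrow> H \<subseteq> ksub G t \<longrightarrow>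
     (1/2^(k+1)) * real (card G choose t) \<le> real (card H) \<longrightarrow>
     (\<exists>u. strict_mono_on {..<t*r} u \<and> u ` {..<t*r} \<subseteq> G \<and>
       (\<forall>h. (\<forall>a<t. a*r \<le> h a \<and> h a < Suc a * r) \<longrightarrow> u ` h ` {..<t} \<in> H))"
    using dense[OF r, of t] dp by blast
  define K where "K = real (g0 choose t)"
  define c0 where "c0 = real (fact t) / (real t ^ t * real s ^ (t-1))"
  have c0: "c0 > 0" using t s by (simp add: c0_def)
  define C where "C = 4*K + 4*real s / c0"
  show ?thesis
  proof (intro exI[of _ C] allI impI)
    fix n M Rs
    assume n: "n > 0" and kn: "k dvd n" and Rs: "Rs \<subseteq> {..<n}" and nc: "\<not> contains n n M r s A"
      and big: "C * real n ^ t < real (Ktt_count t M Rs {..<n})"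
    have fR: "finite Rs" using Rs finite_subset by blast
    define \<P> where "\<P> = ksub Rs t"
    have fP: "finite \<P>" using fR by (simp add: \<P>_def finite_ksub)
    define N where "N = Ktt_count t M Rs {..<n}"
    define sp where "sp R = (s \<le> card (SS M n k R))" for R
    define f where "f R = real (card (colnb M n R) choose t)" for R
    define e where "e R = (\<Sum>q<k. real (card (colnb M n R \<inter> block_idx n k q) choose t))" for R
    have N_eq: "real N = (\<Sum>R\<in>\<P>. f R)"
    proof -
      have "N = (\<Sum>R\<in>\<P>. card {j\<in>{..<n}. \<forall>i\<in>R. M i j} choose t)"
        unfolding N_def \<P>_def using fR by (intro Ktt_sum) auto
      also have "\<dots> = (\<Sum>R\<in>\<P>. card (colnb M n R) choose t)" by (simp add: colnb_def)
      finally show ?thesis by (simp add: f_def of_nat_sum)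
    qed
    have Nq_eq: "real (Ktt_count t M Rs (block_idx n k q)) = (\<Sum>R\<in>\<P>. real (card (colnb M n R \<inter> block_idx n k q) choose t))"
      if q: "q < k" for q
    proof -
      have "Ktt_count t M Rs (block_idx n k q) = (\<Sum>R\<in>\<P>. card {j\<in>block_idx n k q. \<forall>i\<in>R. M i j} choose t)"
        unfolding \<P>_def using fR by (intro Ktt_sum) (auto simp: block_idx_def)
      also have "\<dots> = (\<Sum>R\<in>\<P>. card (colnb M n R \<inter> block_idx n k q) choose t)"
      proof (rule sum.cong[OF refl])
        fix R
        have "{j\<in>block_idx n k q. \<forall>i\<in>R. M i j} = colnb M n R \<inter> block_idx n k q"
          using block_sub[OF q kn] by (auto simp: colnb_def)
        then show "card {j\<in>block_idx n k q. \<forall>i\<in>R. M i j} choose t = card (colnb M n R \<inter> block_idx n k q) choose t"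
          by simp
      qed
      finally show ?thesis by (simp add: of_nat_sum)
    qed
    have W_eq: "(\<Sum>q<k. real (Ktt_count t M Rs (block_idx n k q))) = (\<Sum>R\<in>\<P>. e R)"
      unfolding e_def by (simp add: Nq_eq sum.swap[of _ "{..<k}"])
    have SP: "(\<Sum>R\<in>{R\<in>\<P>. sp R}. f R) \<le> real N / 2 + K * real n ^ t"
      using spread_total[OF g0 nc rp r Rs] unfolding f_def sp_def K_def N_def \<P>_def
      by (simp add: of_nat_sum)
    have split: "(\<Sum>R\<in>\<P>. g R) = (\<Sum>R\<in>{R\<in>\<P>. sp R}. g R) + (\<Sum>R\<in>{R\<in>\<P>. \<not> sp R}. g R)" for g :: "nat set \<Rightarrow> real"
    proof -
      have "sum g \<P> = sum g ({R\<in>\<P>. sp R} \<union> {R\<in>\<P>. \<not> sp R})" by (rule arg_cong[where f="sum g"]) blast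
      also have "\<dots> = (\<Sum>R\<in>{R\<in>\<P>. sp R}. g R) + (\<Sum>R\<in>{R\<in>\<P>. \<not> sp R}. g R)"
        by (rule sum.union_disjoint) (use fP in auto)
      finally show ?thesis .
    qed
    have eR: "c0 * f R - real s \<le> e R" if "\<not> sp R" for R
      using conc_R[OF t s k kn] that unfolding c0_def f_def e_def sp_def by simp
    have e0: "0 \<le> e R" for R unfolding e_def by (intro sum_nonneg) simp
    have cardP: "real (card {R\<in>\<P>. \<not> sp R}) \<le> real n ^ t"
    proof -
      have "card {R\<in>\<P>. \<not> sp R} \<le> card \<P>" using fP by (intro card_mono) auto
      also have "card \<P> = card Rs choose t" using fR by (simp add: \<P>_def card_ksub)
      also have "\<dots> \<le> n choose t"
        using Rs by (intro binomial_right_mono) (metis card_lessThan card_mono finite_lessThan)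
      finally have "real (card {R\<in>\<P>. \<not> sp R}) \<le> real (n choose t)" by simp
      also have "\<dots> \<le> real n ^ t" by (rule choose_le_pow)
      finally show ?thesis .
    qed
    have "(\<Sum>R\<in>{R\<in>\<P>. \<not> sp R}. c0 * f R - real s) \<le> (\<Sum>R\<in>{R\<in>\<P>. \<not> sp R}. e R)"
      by (intro sum_mono eR) auto
    also have "\<dots> \<le> (\<Sum>R\<in>\<P>. e R)"
      using split[of e] e0 by (simp add: sum_nonneg)
    finally have "(\<Sum>R\<in>{R\<in>\<P>. \<not> sp R}. c0 * f R - real s) \<le> (\<Sum>R\<in>\<P>. e R)" .
    moreover have "(\<Sum>R\<in>{R\<in>\<P>. \<not> sp R}. c0 * f R - real s) = c0 * (\<Sum>R\<in>{R\<in>\<P>. \<not> sp R}. f R) - real s * real (card {R\<in>\<P>. \<not> sp R})"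
      by (simp add: sum_subtractf sum_distrib_left mult.commute)
    ultimately have W1: "(\<Sum>R\<in>\<P>. e R) \<ge> c0 * (\<Sum>R\<in>{R\<in>\<P>. \<not> sp R}. f R) - real s * real (card {R\<in>\<P>. \<not> sp R})"
      by linarith
    have conc: "(\<Sum>R\<in>{R\<in>\<P>. \<not> sp R}. f R) \<ge> real N / 2 - K * real n ^ t"
      using split[of f] SP N_eq by linarith
    have W2: "(\<Sum>R\<in>\<P>. e R) \<ge> c0 * (real N / 2 - K * real n ^ t) - real s * real n ^ t"
    proof -
      have "c0 * (real N / 2 - K * real n ^ t) \<le> c0 * (\<Sum>R\<in>{R\<in>\<P>. \<not> sp R}. f R)"
        using conc c0 by (intro mult_left_mono) auto
      moreover have "real s * real (card {R\<in>\<P>. \<not> sp R}) \<le> real s * real n ^ t"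
        using cardP by (intro mult_left_mono) auto
      ultimately show ?thesis using W1 by linarith
    qed
    have bigN: "C * real n ^ t < real N" using big by (simp add: N_def)
    have "c0 * C = 4 * c0 * K + 4 * real s" using c0 by (simp add: C_def field_simps)
    then have "c0 * (C * real n ^ t) = 4 * c0 * K * real n ^ t + 4 * real s * real n ^ t"
      by (metis distrib_right mult.assoc)
    moreover have "c0 * (C * real n ^ t) \<le> c0 * real N" using bigN c0 by (intro mult_left_mono) auto
    ultimately have "c0 * real N / 4 \<le> c0 * (real N / 2 - K * real n ^ t) - real s * real n ^ t"
      by (simp add: algebra_simps)
    with W2 have Wb: "(\<Sum>q<k. real (Ktt_count t M Rs (block_idx n k q))) \<ge> c0 * real N / 4"
      using W_eq by linarith
    show "\<exists>q<k. real (fact t) / (4 * real s^(t-1) * real t^t) * real (Ktt_count t M Rs {..<n}) / real k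
        \<le> real (Ktt_count t M Rs (block_idx n k q))"
    proof (rule ccontr)
      assume "\<not> ?thesis"
      then have lt: "real (Ktt_count t M Rs (block_idx n k q)) < c0 * real N / 4 / real k" if "q < k" for q
        using that unfolding c0_def N_def by (auto simp: field_simps not_le)
      have "(\<Sum>q<k. real (Ktt_count t M Rs (block_idx n k q))) < (\<Sum>q<k. c0 * real N / 4 / real k)"
        using k lt by (intro sum_strict_mono) auto
      also have "\<dots> = c0 * real N / 4" using k by simp
      finally show False using Wb by linarith
    qed
  qed
qed


lemma contains_T:
  assumes "contains n n (\<lambda>i j. M j i) s r (\<lambda>i j. A j i)"
  shows "contains n n M r s A"
proof -
  obtain f g where H: "strict_mono_on {..<s} f \<and> f ` {..<s} \<subseteq> {..<n} \<and> strict_mono_on {..<r} g \<and> g ` {..<r} \<subseteq> {..<n} \<and>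
    (\<forall>i<s. \<forall>j<r. A j i \<longrightarrow> M (g j) (f i))"
    using assms unfolding contains_def by (elim exE) (rule that)
  have "\<forall>i<r. \<forall>j<s. A i j \<longrightarrow> M (g i) (f j)" using H by blast
  then show ?thesis unfolding contains_def using H by (intro exI[of _ g] exI[of _ f]) simp
qed

lemma row_partite_T:
  assumes "column_partite t r s A"
  shows "row_partite t s r (\<lambda>i j. A j i)"
  using assms unfolding column_partite_def row_partite_def .

theorem lemma3p2:
  fixes t r s k :: nat and A :: "nat \<Rightarrow> nat \<Rightarrow> bool"
  assumes "t \<ge> 2" and "r > 0" and "s > 0" and "k > 0"
    and "tt_partite t r s A"
  shows "\<exists>C::real. \<forall>n::nat. \<forall>M :: nat \<Rightarrow> nat \<Rightarrow> bool.
           n > 0 \<longrightarrow> k dvd n \<longrightarrow> \<not> contains n n M r s A \<longrightarrow>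
           real (Ktt_count t M {..<n} {..<n}) > C * real n ^ t \<longrightarrow>
           (\<exists>p<k. \<exists>q<k. real (Ktt_count t M (block_idx n k p) (block_idx n k q)) \<ge>
              (real (fact t))^2 / (16 * (real (r * s)) ^ (t - 1) * (real t) ^ (2 * t))
              * (real (Ktt_count t M {..<n} {..<n}) / (real k)^2))"
proof -
  have t: "t \<ge> 1" using assms(1) by simp
  have rp: "row_partite t r s A" and cp: "column_partite t r s A"
    using assms(5) by (auto simp: tt_partite_def)
  have rpT: "row_partite t s r (\<lambda>i j. A j i)" by (rule row_partite_T[OF cp])
  obtain C1 where C1: "\<forall>n M Rs. n > 0 \<longrightarrow> k dvd n \<longrightarrow> Rs \<subseteq> {..<n} \<longrightarrow> \<not> contains n n M r s A \<longrightarrow>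
     C1 * real n ^ t < real (Ktt_count t M Rs {..<n}) \<longrightarrow>
     (\<exists>q<k. real (fact t) / (4 * real s^(t-1) * real t^t) * real (Ktt_count t M Rs {..<n}) / real k
        \<le> real (Ktt_count t M Rs (block_idx n k q)))"
    using strip_lemma[OF t assms(2,3,4) rp] by (elim exE) (rule that)
  obtain C2 where C2: "\<forall>n M Rs. n > 0 \<longrightarrow> k dvd n \<longrightarrow> Rs \<subseteq> {..<n} \<longrightarrow> \<not> contains n n M s r (\<lambda>i j. A j i) \<longrightarrow>
     C2 * real n ^ t < real (Ktt_count t M Rs {..<n}) \<longrightarrow>
     (\<exists>q<k. real (fact t) / (4 * real r^(t-1) * real t^t) * real (Ktt_count t M Rs {..<n}) / real k
        \<le> real (Ktt_count t M Rs (block_idx n k q)))"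
    using strip_lemma[OF t assms(3,2,4) rpT] by (elim exE) (rule that)
  define c1 where "c1 = real (fact t) / (4 * real s^(t-1) * real t^t)"
  define c2 where "c2 = real (fact t) / (4 * real r^(t-1) * real t^t)"
  have c1: "c1 > 0" using assms t by (simp add: c1_def)
  have c2: "c2 > 0" using assms t by (simp add: c2_def)
  have kk: "real k > 0" using assms by simp
  define C where "C = max C1 (C2 * real k / c1)"
  show ?thesis
  proof (intro exI[of _ C] allI impI)
    fix n M
    assume n: "n > 0" and kn: "k dvd n" and nc: "\<not> contains n n M r s A"
      and big: "real (Ktt_count t M {..<n} {..<n}) > C * real n ^ t"
    define N where "N = real (Ktt_count t M {..<n} {..<n})"
    have np: "real n ^ t > 0" using n by simp
    have "C1 * real n ^ t \<le> C * real n ^ t" using np by (intro mult_right_mono) (auto simp: C_def)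
    then have "C1 * real n ^ t < real (Ktt_count t M {..<n} {..<n})" using big by linarith
    then obtain q where q: "q < k" and Nq: "c1 * N / real k \<le> real (Ktt_count t M {..<n} (block_idx n k q))"
      using C1 n kn nc unfolding c1_def N_def by blast
    define MT where "MT = (\<lambda>i j. M j i)"
    have ncT: "\<not> contains n n MT s r (\<lambda>i j. A j i)" using nc contains_T unfolding MT_def by blast
    have swq: "Ktt_count t M {..<n} (block_idx n k q) = Ktt_count t MT (block_idx n k q) {..<n}"
      unfolding MT_def by (rule Ktt_swap)
    have "C2 * real n ^ t \<le> c1 * C / real k * real n ^ t"
    proof -
      have "C2 * real k / c1 \<le> C" by (simp add: C_def)
      then have "C2 \<le> c1 * C / real k" using c1 kk by (simp add: field_simps)
      then show ?thesis using np by (intro mult_right_mono) auto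
    qed
    also have "\<dots> = c1 * (C * real n ^ t) / real k" by simp
    also have "\<dots> < c1 * N / real k" using big c1 kk unfolding N_def by (intro divide_strict_right_mono mult_strict_left_mono) auto
    also have "\<dots> \<le> real (Ktt_count t MT (block_idx n k q) {..<n})" using Nq swq by simp
    finally have bigq: "C2 * real n ^ t < real (Ktt_count t MT (block_idx n k q) {..<n})" .
    obtain p where p: "p < k" and Np: "c2 * real (Ktt_count t MT (block_idx n k q) {..<n}) / real k
        \<le> real (Ktt_count t MT (block_idx n k q) (block_idx n k p))"
      using C2 n kn ncT bigq block_sub[OF q kn] unfolding c2_def by blast
    have swp: "Ktt_count t MT (block_idx n k q) (block_idx n k p) = Ktt_count t M (block_idx n k p) (block_idx n k q)"
      unfolding MT_def by (rule Ktt_swap[symmetric])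
    have "c2 * (c1 * N / real k) / real k \<le> c2 * real (Ktt_count t MT (block_idx n k q) {..<n}) / real k"
      using Nq swq c2 kk by (intro divide_right_mono mult_left_mono) auto
    also have "\<dots> \<le> real (Ktt_count t M (block_idx n k p) (block_idx n k q))" using Np swp by simp
    finally have fin: "c2 * (c1 * N / real k) / real k \<le> real (Ktt_count t M (block_idx n k p) (block_idx n k q))" .
    have eq: "c2 * (c1 * N / real k) / real k = (real (fact t))^2 / (16 * (real (r * s)) ^ (t - 1) * (real t) ^ (2 * t))
              * (N / (real k)^2)"
    proof -
      have e1: "real t ^ (2*t) = real t^t * real t^t" by (simp add: mult_2 power_add)
      have e2: "real (r*s)^(t-1) = real r^(t-1) * real s^(t-1)" by (simp add: power_mult_distrib)
      have nz: "real t ^ t > 0" "real r^(t-1) > 0" "real s^(t-1) > 0" using t assms by auto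
      show ?thesis unfolding c1_def c2_def e1 e2 using nz kk
        by (simp add: field_simps power2_eq_square)
    qed
    show "\<exists>p<k. \<exists>q<k. real (Ktt_count t M (block_idx n k p) (block_idx n k q)) \<ge>
              (real (fact t))^2 / (16 * (real (r * s)) ^ (t - 1) * (real t) ^ (2 * t))
              * (real (Ktt_count t M {..<n} {..<n}) / (real k)^2)"
      using fin eq p q unfolding N_def by auto
  qed
qed


end
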